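(* Let $P$ be a finite poset, $\epsilon\in\{1,-1\}$, $n\ge2$ an integer and $\xi\in S^{(n\epsilon)}$. Define $\xi_1\in\mathbb Z^{P^-}$ by $\xi_1(w)=\lfloor \xi(w)/n\rfloor$ if $w$ is a maximal element of $P$ or $w=-\infty$, and $\xi_1(w)=\lfloor \xi^{+\uparrow}(w)/n\rfloor-\lfloor \xi^{+\prime\uparrow}(w)/n\rfloor$ otherwise. Then (a) $\xi_1^{+\uparrow}(z)=\lfloor \xi^{+\uparrow}(z)/n\rfloor$ for every $z\in P$, and $\max\{\xi_1^+(C)\}=\lfloor \tfrac1n\max\{\xi^+(C)\}\rfloor$, maxima over maximal chains $C$ of $P$; (b) $\xi_1\in S^{(\epsilon)}$.
   Context: $P^-=P\cup\{-\infty\}$, $P^+=P\cup\{+\infty\}$, with $-\infty<z<+\infty$ for all $z\in P$; $a\lessdot b$ means $b$ covers $a$. $\xi^+(B)=\sum_{b\in B}\xi(b)$. For $z\in P$: $\xi^{+\uparrow}(z)=\max\sum_{\ell=0}^s\xi(z_\ell)$ and $\xi^{+\prime\uparrow}(z)=\max\sum_{\ell=1}^s\xi(z_\ell)$ (empty sum $0$), maxima over all $z=z_0\lessdot z_1\lessdot\cdots\lessdot z_s\lessdot+\infty$ in $P^+$. For $m\in\mathbb Z$, $S^{(m)}=\{\xi\in\mathbb Z^{P^-}:\xi(x)\ge m\ \forall x\in P,\ \xi(-\infty)\ge\xi^+(C)+m$ for every maximal chain $C$ of $P\}$. *)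

theory Defs
  imports Main
begin

(* A finite poset P is modelled as a finite subset P of an ordered type, with the
   induced order.  Elements of P^- are  'a option :  None = -infinity, Some x = x. *)

definition pos_covers :: "'a::order set \<Rightarrow> 'a \<Rightarrow> 'a \<Rightarrow> bool" where
  "pos_covers P a b \<longleftrightarrow> a \<in> P \<and> b \<in> P \<and> a < b \<and> \<not> (\<exists>c\<in>P. a < c \<and> c < b)"

definition pos_maximal :: "'a::order set \<Rightarrow> 'a \<Rightarrow> bool" where
  "pos_maximal P x \<longleftrightarrow> x \<in> P \<and> \<not> (\<exists>y\<in>P. x < y)"

definition pos_upchains :: "'a::order set \<Rightarrow> 'a \<Rightarrow> 'a list set" where
  "pos_upchains P z = {zs. zs \<noteq> [] \<and> hd zs = z \<and> set zs \<subseteq> P \<and>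
      (\<forall>i. Suc i < length zs \<longrightarrow> pos_covers P (zs ! i) (zs ! Suc i)) \<and>
      pos_maximal P (last zs)}"

definition pos_up_sum :: "'a::order set \<Rightarrow> ('a option \<Rightarrow> int) \<Rightarrow> 'a \<Rightarrow> int" where
  "pos_up_sum P \<xi> z = Max ((\<lambda>zs. \<Sum>x\<leftarrow>zs. \<xi> (Some x)) ` pos_upchains P z)"

definition pos_up_sum' :: "'a::order set \<Rightarrow> ('a option \<Rightarrow> int) \<Rightarrow> 'a \<Rightarrow> int" where
  "pos_up_sum' P \<xi> z = Max ((\<lambda>zs. \<Sum>x\<leftarrow>tl zs. \<xi> (Some x)) ` pos_upchains P z)"

definition pos_chain :: "'a::order set \<Rightarrow> 'a set \<Rightarrow> bool" where
  "pos_chain P C \<longleftrightarrow> C \<subseteq> P \<and> (\<forall>x\<in>C. \<forall>y\<in>C. x \<le> y \<or> y \<le> x)"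

definition pos_maximal_chain :: "'a::order set \<Rightarrow> 'a set \<Rightarrow> bool" where
  "pos_maximal_chain P C \<longleftrightarrow> pos_chain P C \<and> (\<forall>D. pos_chain P D \<and> C \<subseteq> D \<longrightarrow> D = C)"

definition pos_chain_sum :: "('a option \<Rightarrow> int) \<Rightarrow> 'a set \<Rightarrow> int" where
  "pos_chain_sum \<xi> C = (\<Sum>x\<in>C. \<xi> (Some x))"

definition pos_S :: "'a::order set \<Rightarrow> int \<Rightarrow> ('a option \<Rightarrow> int) set" where
  "pos_S P m = {\<xi>. (\<forall>x\<in>P. \<xi> (Some x) \<ge> m) \<and>
      (\<forall>C. pos_maximal_chain P C \<longrightarrow> \<xi> None \<ge> pos_chain_sum \<xi> C + m)}"

end

theory Submission imports Defs begin

lemma U_alt: "pos_upchains P z = {zs. zs \<noteq> [] \<and> hd zs = z \<and> set zs \<subseteq> P \<and>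
      successively (pos_covers P) zs \<and> pos_maximal P (last zs)}"
  unfolding pos_upchains_def successively_conv_nth by simp

lemma U_cons: "zs \<in> pos_upchains P z \<longleftrightarrow> (zs = [z] \<and> pos_maximal P z) \<or>
   (\<exists>w ws. zs = z # ws \<and> pos_covers P z w \<and> ws \<in> pos_upchains P w)"
proof (cases zs)
  case Nil then show ?thesis by (simp add: U_alt)
next
  case (Cons x ws)
  show ?thesis
  proof (cases ws)
    case Nil then show ?thesis using Cons by (auto simp: U_alt pos_maximal_def)
  next
    case (Cons y ys)
    then show ?thesis using \<open>zs = x # ws\<close>
      by (auto simp: U_alt pos_covers_def)
  qed
qed

lemma U_props: "zs \<in> pos_upchains P z \<Longrightarrow> distinct zs \<and> (\<forall>x\<in>set zs. z \<le> x) \<and> z \<in> set zs \<and> set zs \<subseteq> P"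
proof (induction zs arbitrary: z)
  case Nil then show ?case by (simp add: U_alt)
next
  case (Cons x ws)
  have "(x # ws = [z] \<and> pos_maximal P z) \<or>
   (\<exists>w ws'. x # ws = z # ws' \<and> pos_covers P z w \<and> ws' \<in> pos_upchains P w)"
    using Cons.prems U_cons[of "x#ws" P z] by blast
  then show ?case
  proof (elim disjE exE conjE)
    assume "x # ws = [z]" "pos_maximal P z" then show ?thesis by (auto simp: pos_maximal_def)
  next
    fix w ws' assume a: "x # ws = z # ws'" "pos_covers P z w" "ws' \<in> pos_upchains P w"
    with Cons.IH[of w] have "distinct ws \<and> (\<forall>y\<in>set ws. w \<le> y) \<and> w \<in> set ws \<and> set ws \<subseteq> P" by simp
    with a show ?thesis by (auto simp: pos_covers_def intro: order.trans)
  qed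
qed

lemma U_finite: "finite P \<Longrightarrow> finite (pos_upchains P z)"
  by (rule finite_subset[OF _ finite_subset_distinct[of P]]) (use U_props in blast)

lemma covers_exist:
  assumes "finite P" "z \<in> P" "\<not> pos_maximal P z"
  shows "\<exists>w. pos_covers P z w"
proof -
  let ?A = "{y\<in>P. z < y}"
  have "?A \<noteq> {}" using assms by (auto simp: pos_maximal_def)
  then obtain m where m: "m \<in> ?A" "\<forall>b\<in>?A. b \<le> m \<longrightarrow> m = b"
    using finite_has_minimal[of ?A] assms(1) by auto
  then have "pos_covers P z m" using assms(2) by (force simp: pos_covers_def)
  then show ?thesis by blast
qed

lemma covers_measure:
  assumes "finite P" "pos_covers P z w"
  shows "card {y\<in>P. w < y} < card {y\<in>P. z < y}"
proof (rule psubset_card_mono)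
  show "finite {y\<in>P. z < y}" using assms(1) by simp
  show "{y\<in>P. w < y} \<subset> {y\<in>P. z < y}" using assms(2)
    by (auto simp: pos_covers_def intro: order.strict_trans)
qed

lemma U_nonempty:
  assumes "finite P" "z \<in> P"
  shows "pos_upchains P z \<noteq> {}"
  using assms(2)
proof (induction z rule: measure_induct_rule[where f = "\<lambda>z. card {y\<in>P. z < y}"])
  case (less z)
  show ?case
  proof (cases "pos_maximal P z")
    case True then show ?thesis using U_cons[of "[z]" P z] by blast
  next
    case False
    then obtain w where w: "pos_covers P z w" using covers_exist assms(1) less.prems by blast
    then have "w \<in> P" by (simp add: pos_covers_def)
    with less.IH covers_measure[OF assms(1) w] obtain ws where "ws \<in> pos_upchains P w" by blast
    then have "z # ws \<in> pos_upchains P z" using U_cons[of "z # ws" P z] w by blast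
    then show ?thesis by blast
  qed
qed

lemma maxI: "finite A \<Longrightarrow> a \<in> A \<Longrightarrow> f a = m \<Longrightarrow> (\<forall>x\<in>A. f x \<le> (m::int)) \<Longrightarrow> Max (f ` A) = m"
  by (rule Max_eqI) auto

lemma upsum_ge: "finite P \<Longrightarrow> zs \<in> pos_upchains P z \<Longrightarrow> (\<Sum>x\<leftarrow>zs. \<eta> (Some x)) \<le> pos_up_sum P \<eta> z"
  unfolding pos_up_sum_def by (rule Max_ge) (auto simp: U_finite)

lemma upsum_att: "finite P \<Longrightarrow> z \<in> P \<Longrightarrow> \<exists>zs\<in>pos_upchains P z. (\<Sum>x\<leftarrow>zs. \<eta> (Some x)) = pos_up_sum P \<eta> z"
proof -
  assume a: "finite P" "z \<in> P"
  have "pos_up_sum P \<eta> z \<in> (\<lambda>zs. \<Sum>x\<leftarrow>zs. \<eta> (Some x)) ` pos_upchains P z"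
    unfolding pos_up_sum_def by (rule Max_in) (use a U_finite U_nonempty in auto)
  then show ?thesis by auto
qed

lemma upsum_max:
  assumes "pos_maximal P z"
  shows "pos_up_sum P \<eta> z = \<eta> (Some z)" "pos_up_sum' P \<eta> z = 0"
proof -
  have "pos_upchains P z = {[z]}"
    using assms U_cons[of _ P z] by (auto simp: pos_maximal_def pos_covers_def)
  then show "pos_up_sum P \<eta> z = \<eta> (Some z)" "pos_up_sum' P \<eta> z = 0"
    by (simp_all add: pos_up_sum_def pos_up_sum'_def)
qed

lemma upsum_nonmax:
  assumes "finite P" "z \<in> P" "\<not> pos_maximal P z"
  shows "pos_up_sum' P \<eta> z = Max (pos_up_sum P \<eta> ` {w. pos_covers P z w})"
    "pos_up_sum P \<eta> z = \<eta> (Some z) + Max (pos_up_sum P \<eta> ` {w. pos_covers P z w})"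
proof -
  let ?W = "{w. pos_covers P z w}"
  let ?M = "Max (pos_up_sum P \<eta> ` ?W)"
  have Wf: "finite ?W" by (rule finite_subset[OF _ assms(1)]) (auto simp: pos_covers_def)
  have Wne: "?W \<noteq> {}" using covers_exist[OF assms] by auto
  have "?M \<in> pos_up_sum P \<eta> ` ?W" using Wf Wne by (intro Max_in) auto
  then obtain w0 where w0: "pos_covers P z w0" "pos_up_sum P \<eta> w0 = ?M" by auto
  then have "w0 \<in> P" by (simp add: pos_covers_def)
  then obtain ws0 where ws0: "ws0 \<in> pos_upchains P w0" "(\<Sum>x\<leftarrow>ws0. \<eta> (Some x)) = pos_up_sum P \<eta> w0"
    using upsum_att[OF assms(1)] by blast
  have in0: "z # ws0 \<in> pos_upchains P z" using U_cons[of "z # ws0" P z] w0 ws0 by blast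
  have bound: "(\<Sum>x\<leftarrow>tl zs. \<eta> (Some x)) \<le> ?M \<and> hd zs = z \<and> zs = hd zs # tl zs"
    if "zs \<in> pos_upchains P z" for zs
  proof -
    from that U_cons[of zs P z] assms(3) obtain w ws where
      a: "zs = z # ws" "pos_covers P z w" "ws \<in> pos_upchains P w" by blast
    have "(\<Sum>x\<leftarrow>ws. \<eta> (Some x)) \<le> pos_up_sum P \<eta> w" using upsum_ge[OF assms(1) a(3)] .
    also have "\<dots> \<le> ?M" using Wf a(2) by (intro Max_ge) auto
    finally show ?thesis using a by simp
  qed
  show 1: "pos_up_sum' P \<eta> z = ?M"
    unfolding pos_up_sum'_def
  proof (rule maxI[OF U_finite[OF assms(1)] in0])
    show "(\<Sum>x\<leftarrow>tl (z # ws0). \<eta> (Some x)) = ?M" using ws0 w0 by simp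
    show "\<forall>x\<in>pos_upchains P z. (\<Sum>x\<leftarrow>tl x. \<eta> (Some x)) \<le> ?M" using bound by blast
  qed
  show "pos_up_sum P \<eta> z = \<eta> (Some z) + ?M"
    unfolding pos_up_sum_def[of P \<eta> z]
  proof (rule maxI[OF U_finite[OF assms(1)] in0])
    show "(\<Sum>x\<leftarrow>z # ws0. \<eta> (Some x)) = \<eta> (Some z) + ?M" 
    proof -
      have "(\<Sum>x\<leftarrow>z # ws0. \<eta> (Some x)) = \<eta> (Some z) + (\<Sum>x\<leftarrow>ws0. \<eta> (Some x))" by simp
      also have "\<dots> = \<eta> (Some z) + ?M" by (simp only: ws0(2) w0(2))
      finally show ?thesis .
    qed
    show "\<forall>x\<in>pos_upchains P z. (\<Sum>x\<leftarrow>x. \<eta> (Some x)) \<le> \<eta> (Some z) + ?M"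
    proof
      fix zs assume "zs \<in> pos_upchains P z"
      from bound[OF this] have b: "(\<Sum>x\<leftarrow>tl zs. \<eta> (Some x)) \<le> ?M" "zs = z # tl zs" by auto
      have "(\<Sum>x\<leftarrow>zs. \<eta> (Some x)) = \<eta> (Some z) + (\<Sum>x\<leftarrow>tl zs. \<eta> (Some x))"
        by (subst b(2)) simp
      with b(1) show "(\<Sum>x\<leftarrow>zs. \<eta> (Some x)) \<le> \<eta> (Some z) + ?M" by linarith
    qed
  qed
qed


lemma U_chain: "zs \<in> pos_upchains P z \<Longrightarrow> pos_chain P (set zs)"
proof (induction zs arbitrary: z)
  case Nil then show ?case by (simp add: U_alt)
next
  case (Cons x ws)
  have "(x # ws = [z] \<and> pos_maximal P z) \<or>
   (\<exists>w ws'. x # ws = z # ws' \<and> pos_covers P z w \<and> ws' \<in> pos_upchains P w)"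
    using Cons.prems U_cons[of "x#ws" P z] by blast
  then show ?case
  proof (elim disjE exE conjE)
    assume "x # ws = [z]" "pos_maximal P z" then show ?thesis by (auto simp: pos_maximal_def pos_chain_def)
  next
    fix w ws' assume a: "x # ws = z # ws'" "pos_covers P z w" "ws' \<in> pos_upchains P w"
    with Cons.IH[of w] have "pos_chain P (set ws)" by simp
    moreover have "\<forall>y\<in>set ws. z \<le> y" using U_props[OF a(3)] a(1,2)
      by (auto simp: pos_covers_def intro: order.trans)
    ultimately show ?thesis using a by (auto simp: pos_chain_def pos_covers_def)
  qed
qed

lemma U_sat: "zs \<in> pos_upchains P z \<Longrightarrow> d \<in> P \<Longrightarrow> (\<forall>x\<in>set zs. x \<le> d \<or> d \<le> x) \<Longrightarrow> z \<le> d \<Longrightarrow> d \<in> set zs"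
proof (induction zs arbitrary: z)
  case Nil then show ?case by (simp add: U_alt)
next
  case (Cons x ws)
  have "(x # ws = [z] \<and> pos_maximal P z) \<or>
   (\<exists>w ws'. x # ws = z # ws' \<and> pos_covers P z w \<and> ws' \<in> pos_upchains P w)"
    using Cons.prems U_cons[of "x#ws" P z] by blast
  then show ?case
  proof (elim disjE exE conjE)
    assume "x # ws = [z]" "pos_maximal P z" then show ?thesis using Cons.prems
      by (auto simp: pos_maximal_def order.order_iff_strict)
  next
    fix w ws' assume a: "x # ws = z # ws'" "pos_covers P z w" "ws' \<in> pos_upchains P w"
    have wi: "w \<in> set ws" using U_props[OF a(3)] a(1) by simp
    show ?thesis
    proof (cases "w \<le> d")
      case True
      then have "d \<in> set ws" using Cons.IH[of w] a Cons.prems by simp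
      then show ?thesis by simp
    next
      case False
      then have "d < w" using Cons.prems(3) wi by auto
      then have "d = z" using a(2) Cons.prems(2,4) by (auto simp: pos_covers_def order.order_iff_strict)
      then show ?thesis using a by simp
    qed
  qed
qed

definition pos_minimal :: "'a::order set \<Rightarrow> 'a \<Rightarrow> bool" where
  "pos_minimal P z \<longleftrightarrow> z \<in> P \<and> (\<forall>y\<in>P. \<not> y < z)"

lemma U_maxchain:
  assumes "zs \<in> pos_upchains P z" "pos_minimal P z"
  shows "pos_maximal_chain P (set zs)"
  unfolding pos_maximal_chain_def
proof (intro conjI allI impI)
  show c: "pos_chain P (set zs)" by (rule U_chain[OF assms(1)])
  fix D assume D: "pos_chain P D \<and> set zs \<subseteq> D"
  have zin: "z \<in> set zs" using U_props[OF assms(1)] by simp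
  have "d \<in> set zs" if "d \<in> D" for d
  proof (rule U_sat[OF assms(1)])
    show "d \<in> P" using D that by (auto simp: pos_chain_def)
    show "\<forall>x\<in>set zs. x \<le> d \<or> d \<le> x" using D that by (auto simp: pos_chain_def)
    have "z \<le> d \<or> d \<le> z" using D that zin by (auto simp: pos_chain_def)
    then show "z \<le> d" using assms(2) \<open>d \<in> P\<close> by (auto simp: pos_minimal_def order.order_iff_strict)
  qed
  then show "D = set zs" using D by blast
qed

lemma chain_least:
  assumes "finite C" "C \<noteq> {}" "\<forall>x\<in>C. \<forall>y\<in>C. x \<le> y \<or> y \<le> (x::'a::order)"
  shows "\<exists>z\<in>C. \<forall>c\<in>C. z \<le> c"
proof -
  obtain m where m: "m \<in> C" "\<forall>b\<in>C. b \<le> m \<longrightarrow> m = b" using finite_has_minimal[OF assms(1,2)] by blast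
  then have "\<forall>c\<in>C. m \<le> c" using assms(3) by (metis order.refl)
  with m show ?thesis by blast
qed

lemma Q_lemma:
  assumes "finite C" "C \<subseteq> P" "\<forall>x\<in>C. \<forall>y\<in>C. x \<le> y \<or> y \<le> x" "z \<in> C" "\<forall>c\<in>C. z \<le> c"
    "\<forall>D. pos_chain P D \<and> C \<subseteq> D \<and> (\<forall>d\<in>D. z \<le> d) \<longrightarrow> D = C"
  shows "\<exists>zs\<in>pos_upchains P z. set zs = C"
  using assms
proof (induction "card C" arbitrary: C z rule: less_induct)
  case less
  show ?case
  proof (cases "C = {z}")
    case True
    have "pos_maximal P z"
    proof -
      have "\<not> z < y" if "y \<in> P" for y
      proof
        assume zy: "z < y"
        have "pos_chain P {z, y}" using that less.prems(2,4) zy by (auto simp: pos_chain_def order.strict_implies_order)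
        then have "{z, y} = C" using less.prems(6) True zy by (auto simp: order.strict_implies_order)
        then show False using True zy by auto
      qed
      then show ?thesis using less.prems(2,4) by (auto simp: pos_maximal_def)
    qed
    then have "[z] \<in> pos_upchains P z" using U_cons[of "[z]" P z] by blast
    then show ?thesis using True by force
  next
    case False
    let ?C' = "C - {z}"
    have ne: "?C' \<noteq> {}" using False less.prems(4) by blast
    obtain w where w: "w \<in> ?C'" "\<forall>c\<in>?C'. w \<le> c"
      using chain_least[of ?C'] ne less.prems(1,3) by blast
    have zw: "z < w" using w less.prems(5) by (auto simp: order.order_iff_strict)
    have cov: "pos_covers P z w"
      unfolding pos_covers_def
    proof (intro conjI)
      show "z \<in> P" "w \<in> P" using less.prems(2,4) w(1) by auto
      show "z < w" by fact
      show "\<not> (\<exists>c\<in>P. z < c \<and> c < w)"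
      proof
        assume "\<exists>c\<in>P. z < c \<and> c < w"
        then obtain c where c: "c \<in> P" "z < c" "c < w" by blast
        have cmp: "\<forall>x\<in>C. x \<le> c \<or> c \<le> x"
        proof
          fix x assume "x \<in> C"
          show "x \<le> c \<or> c \<le> x"
          proof (cases "x = z")
            case True then show ?thesis using c by (simp add: order.strict_implies_order)
          next
            case False then have "w \<le> x" using w \<open>x \<in> C\<close> by auto
            then show ?thesis using c by (auto intro: order.strict_implies_order order.strict_trans2)
          qed
        qed
        have "pos_chain P (insert c C)" using less.prems(2,3) cmp c(1)
          by (auto simp: pos_chain_def)
        moreover have "\<forall>d\<in>insert c C. z \<le> d" using less.prems(5) c(2) by (auto simp: order.strict_implies_order)
        ultimately have "insert c C = C" using less.prems(6) by blast
        then have "c \<in> ?C'" using c(2) by auto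
        then have "w \<le> c" using w by auto
        then show False using c(3) by auto
      qed
    qed
    have "\<exists>ws\<in>pos_upchains P w. set ws = ?C'"
    proof (rule less.hyps)
      show "card ?C' < card C" using less.prems(1,4) by (meson card_Diff1_less)
      show "finite ?C'" "?C' \<subseteq> P" "\<forall>x\<in>?C'. \<forall>y\<in>?C'. x \<le> y \<or> y \<le> x" "w \<in> ?C'" "\<forall>c\<in>?C'. w \<le> c"
        using less.prems w by auto
      show "\<forall>D. pos_chain P D \<and> ?C' \<subseteq> D \<and> (\<forall>d\<in>D. w \<le> d) \<longrightarrow> D = ?C'"
      proof (intro allI impI)
        fix D assume D: "pos_chain P D \<and> ?C' \<subseteq> D \<and> (\<forall>d\<in>D. w \<le> d)"
        have "pos_chain P (insert z D)" using D less.prems(2,4) zw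
          by (auto simp: pos_chain_def intro: order.trans order.strict_implies_order)
        moreover have "C \<subseteq> insert z D" using D by auto
        moreover have "\<forall>d\<in>insert z D. z \<le> d" using D zw by (auto intro: order.trans order.strict_implies_order)
        ultimately have e: "insert z D = C" using less.prems(6) by blast
        have "z \<notin> D" using D zw by auto
        with e show "D = ?C'" by auto
      qed
    qed
    then obtain ws where ws: "ws \<in> pos_upchains P w" "set ws = ?C'" by blast
    then have "z # ws \<in> pos_upchains P z" using U_cons[of "z # ws" P z] cov by blast
    moreover have "set (z # ws) = C" using ws less.prems(4) by auto
    ultimately show ?thesis by blast
  qed
qed

lemma maxchain_U:
  assumes "finite P" "pos_maximal_chain P C" "C \<noteq> {}"
  shows "\<exists>z zs. pos_minimal P z \<and> zs \<in> pos_upchains P z \<and> set zs = C"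
proof -
  have CP: "C \<subseteq> P" and ch: "\<forall>x\<in>C. \<forall>y\<in>C. x \<le> y \<or> y \<le> x"
    using assms(2) by (auto simp: pos_maximal_chain_def pos_chain_def)
  have fC: "finite C" using CP assms(1) finite_subset by blast
  obtain z where z: "z \<in> C" "\<forall>c\<in>C. z \<le> c" using chain_least[OF fC assms(3) ch] by blast
  have mx: "\<forall>D. pos_chain P D \<and> C \<subseteq> D \<longrightarrow> D = C" using assms(2) by (simp add: pos_maximal_chain_def)
  have "pos_minimal P z"
    unfolding pos_minimal_def
  proof (intro conjI ballI)
    show "z \<in> P" using z CP by auto
    fix y assume y: "y \<in> P"
    show "\<not> y < z"
    proof
      assume yz: "y < z"
      have "pos_chain P (insert y C)" using CP ch y yz z(2)
        by (auto simp: pos_chain_def intro: order.trans order.strict_implies_order)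
      then have "insert y C = C" using mx by blast
      then have "z \<le> y" using z by auto
      then show False using yz by auto
    qed
  qed
  moreover have "\<exists>zs\<in>pos_upchains P z. set zs = C"
    using Q_lemma[OF fC CP ch z] mx by blast
  ultimately show ?thesis by blast
qed

lemma maxchain_nonempty: "pos_maximal_chain P C \<Longrightarrow> P \<noteq> {} \<Longrightarrow> C \<noteq> {}"
proof
  assume a: "pos_maximal_chain P C" "P \<noteq> {}" "C = {}"
  then obtain x where "x \<in> P" by blast
  then have "pos_chain P {x}" by (simp add: pos_chain_def)
  then have "{x} = C" using a unfolding pos_maximal_chain_def by blast
  then show False using a by simp
qed

lemma maxchains_finite: "finite P \<Longrightarrow> finite {C. pos_maximal_chain P C}"
  by (rule finite_subset[of _ "Pow P"]) (auto simp: pos_maximal_chain_def pos_chain_def)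

lemma G_lemma:
  assumes "finite P" "P \<noteq> {}"
  shows "Max (pos_chain_sum \<eta> ` {C. pos_maximal_chain P C}) = Max (pos_up_sum P \<eta> ` {z. pos_minimal P z})"
proof -
  let ?Mi = "{z. pos_minimal P z}"
  let ?M = "Max (pos_up_sum P \<eta> ` ?Mi)"
  have fMi: "finite ?Mi" by (rule finite_subset[OF _ assms(1)]) (auto simp: pos_minimal_def)
  obtain m where m: "m \<in> P" "\<forall>b\<in>P. b \<le> m \<longrightarrow> m = b" using finite_has_minimal[OF assms] by blast
  have "pos_minimal P m" using m by (auto simp: pos_minimal_def order.strict_implies_order)
  then have neMi: "?Mi \<noteq> {}" by blast
  have "?M \<in> pos_up_sum P \<eta> ` ?Mi" using fMi neMi by (intro Max_in) auto
  then obtain z0 where z0: "pos_minimal P z0" "pos_up_sum P \<eta> z0 = ?M" by auto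
  then obtain zs0 where zs0: "zs0 \<in> pos_upchains P z0" "(\<Sum>x\<leftarrow>zs0. \<eta> (Some x)) = pos_up_sum P \<eta> z0"
    using upsum_att[OF assms(1), of z0 \<eta>] by (auto simp: pos_minimal_def)
  have csum: "pos_chain_sum \<eta> (set zs) = (\<Sum>x\<leftarrow>zs. \<eta> (Some x))" if "zs \<in> pos_upchains P z" for zs z
    using U_props[OF that] by (simp add: pos_chain_sum_def sum_list_distinct_conv_sum_set)
  show ?thesis
  proof (rule maxI[OF maxchains_finite[OF assms(1)]])
    show "set zs0 \<in> {C. pos_maximal_chain P C}" using U_maxchain[OF zs0(1) z0(1)] by simp
    show "pos_chain_sum \<eta> (set zs0) = ?M" using csum[OF zs0(1)] zs0(2) z0(2) by simp
    show "\<forall>C\<in>{C. pos_maximal_chain P C}. pos_chain_sum \<eta> C \<le> ?M"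
    proof
      fix C assume "C \<in> {C. pos_maximal_chain P C}"
      then have C: "pos_maximal_chain P C" by simp
      obtain z zs where zz: "pos_minimal P z" "zs \<in> pos_upchains P z" "set zs = C"
        using maxchain_U[OF assms(1) C maxchain_nonempty[OF C assms(2)]] by blast
      have "pos_chain_sum \<eta> C = (\<Sum>x\<leftarrow>zs. \<eta> (Some x))" using csum[OF zz(2)] zz(3) by simp
      also have "\<dots> \<le> pos_up_sum P \<eta> z" by (rule upsum_ge[OF assms(1) zz(2)])
      also have "\<dots> \<le> ?M" using fMi zz(1) by (intro Max_ge) auto
      finally show "pos_chain_sum \<eta> C \<le> ?M" .
    qed
  qed
qed


lemma div_add_ge: "0 < (n::int) \<Longrightarrow> a div n + b div n \<le> (a + b) div n"
proof -
  assume n: "0 < n"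
  have "0 \<le> (a mod n + b mod n) div n" using n by (simp add: pos_imp_zdiv_nonneg_iff)
  then show ?thesis using div_add1_eq[of a b n] by simp
qed

theorem mainTheorem5:
  fixes P :: "'a::order set" and \<epsilon> n :: int and \<xi> :: "'a option \<Rightarrow> int"
  assumes "finite P"
    and "\<epsilon> \<in> {1, -1}"
    and "n \<ge> 2"
    and "\<xi> \<in> pos_S P (n * \<epsilon>)"
  defines "\<xi>1 \<equiv> (\<lambda>w. case w of
              None \<Rightarrow> \<xi> None div n
            | Some x \<Rightarrow> (if pos_maximal P x then \<xi> (Some x) div n
                         else pos_up_sum P \<xi> x div n - pos_up_sum' P \<xi> x div n))"
  shows "(\<forall>z\<in>P. pos_up_sum P \<xi>1 z = pos_up_sum P \<xi> z div n)
       \<and> Max (pos_chain_sum \<xi>1 ` {C. pos_maximal_chain P C})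
           = Max (pos_chain_sum \<xi> ` {C. pos_maximal_chain P C}) div n
       \<and> \<xi>1 \<in> pos_S P \<epsilon>"
proof -
  have n0: "0 < n" using assms(3) by simp
  have monod: "mono (\<lambda>x::int. x div n)" using n0 by (auto simp: mono_def intro: zdiv_mono1)
  have x1S: "\<xi>1 (Some x) = (if pos_maximal P x then \<xi> (Some x) div n
                         else pos_up_sum P \<xi> x div n - pos_up_sum' P \<xi> x div n)" for x
    by (simp add: \<xi>1_def)
  have x1N: "\<xi>1 None = \<xi> None div n" by (simp add: \<xi>1_def)
  have a1: "pos_up_sum P \<xi>1 z = pos_up_sum P \<xi> z div n" if "z \<in> P" for z
    using that
  proof (induction z rule: measure_induct_rule[where f = "\<lambda>z. card {y\<in>P. z < y}"])
    case (less z)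
    show ?case
    proof (cases "pos_maximal P z")
      case True
      then show ?thesis by (simp add: upsum_max x1S)
    next
      case False
      let ?W = "{w. pos_covers P z w}"
      have Wf: "finite ?W" by (rule finite_subset[OF _ assms(1)]) (auto simp: pos_covers_def)
      have Wne: "?W \<noteq> {}" using covers_exist[OF assms(1) less.prems False] by auto
      have "pos_up_sum P \<xi>1 ` ?W = (\<lambda>w. pos_up_sum P \<xi> w div n) ` ?W"
      proof (rule image_cong[OF refl])
        fix w assume "w \<in> ?W"
        then show "pos_up_sum P \<xi>1 w = pos_up_sum P \<xi> w div n"
          using less.IH covers_measure[OF assms(1)] by (auto simp: pos_covers_def)
      qed
      also have "\<dots> = (\<lambda>x. x div n) ` (pos_up_sum P \<xi> ` ?W)" by (simp add: image_image)
      finally have "Max (pos_up_sum P \<xi>1 ` ?W) = Max (pos_up_sum P \<xi> ` ?W) div n"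
        using mono_Max_commute[OF monod, of "pos_up_sum P \<xi> ` ?W"] Wf Wne by simp
      then show ?thesis
        using upsum_nonmax[OF assms(1) less.prems False, of \<xi>1] upsum_nonmax[OF assms(1) less.prems False, of \<xi>]
          x1S[of z] False by simp
    qed
  qed
  have a2: "Max (pos_chain_sum \<xi>1 ` {C. pos_maximal_chain P C})
           = Max (pos_chain_sum \<xi> ` {C. pos_maximal_chain P C}) div n"
  proof (cases "P = {}")
    case True
    have "{C. pos_maximal_chain P C} = {{}}"
      using True by (auto simp: pos_maximal_chain_def pos_chain_def)
    then show ?thesis by (simp add: pos_chain_sum_def)
  next
    case False
    let ?Mi = "{z. pos_minimal P z}"
    have fMi: "finite ?Mi" by (rule finite_subset[OF _ assms(1)]) (auto simp: pos_minimal_def)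
    obtain m where m: "m \<in> P" "\<forall>b\<in>P. b \<le> m \<longrightarrow> m = b" using finite_has_minimal[OF assms(1) False] by blast
    have "pos_minimal P m" using m by (auto simp: pos_minimal_def order.strict_implies_order)
    then have neMi: "?Mi \<noteq> {}" by blast
    have "pos_up_sum P \<xi>1 ` ?Mi = (\<lambda>x. x div n) ` (pos_up_sum P \<xi> ` ?Mi)"
      using a1 by (auto simp: pos_minimal_def image_image intro!: image_cong)
    then have "Max (pos_up_sum P \<xi>1 ` ?Mi) = Max (pos_up_sum P \<xi> ` ?Mi) div n"
      using mono_Max_commute[OF monod, of "pos_up_sum P \<xi> ` ?Mi"] fMi neMi by simp
    then show ?thesis using G_lemma[OF assms(1) False] by simp
  qed
  have b: "\<xi>1 \<in> pos_S P \<epsilon>"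
    unfolding pos_S_def
  proof (intro CollectI conjI allI ballI impI)
    have nepos: "(n * \<epsilon>) div n = \<epsilon>" using n0 by simp
    fix x assume x: "x \<in> P"
    have xi: "\<xi> (Some x) \<ge> n * \<epsilon>" using assms(4) x by (simp add: pos_S_def)
    then have e1: "\<epsilon> \<le> \<xi> (Some x) div n" using zdiv_mono1[OF xi n0] nepos by simp
    show "\<epsilon> \<le> \<xi>1 (Some x)"
    proof (cases "pos_maximal P x")
      case True then show ?thesis using e1 x1S by simp
    next
      case False
      have "pos_up_sum P \<xi> x = \<xi> (Some x) + pos_up_sum' P \<xi> x"
        using upsum_nonmax[OF assms(1) x False, of \<xi>] by simp
      then have "\<xi> (Some x) div n + pos_up_sum' P \<xi> x div n \<le> pos_up_sum P \<xi> x div n"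
        using div_add_ge[OF n0, of "\<xi> (Some x)" "pos_up_sum' P \<xi> x"] by simp
      then show ?thesis using e1 x1S[of x] False by simp
    qed
  next
    fix C assume C: "pos_maximal_chain P C"
    let ?A = "pos_chain_sum \<xi> ` {C. pos_maximal_chain P C}"
    let ?B = "pos_chain_sum \<xi>1 ` {C. pos_maximal_chain P C}"
    have fA: "finite ?A" "finite ?B" using maxchains_finite[OF assms(1)] by auto
    have "Max ?A \<in> ?A" using fA C by (intro Max_in) auto
    then obtain C0 where C0: "pos_maximal_chain P C0" "pos_chain_sum \<xi> C0 = Max ?A" by auto
    have "\<xi> None \<ge> Max ?A + n * \<epsilon>" using assms(4) C0 unfolding pos_S_def by (metis (mono_tags, lifting) mem_Collect_eq)
    then have "(Max ?A + n * \<epsilon>) div n \<le> \<xi> None div n" using zdiv_mono1 n0 by blast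
    moreover have "(Max ?A + n * \<epsilon>) div n = Max ?A div n + \<epsilon>" using n0 by simp
    moreover have "pos_chain_sum \<xi>1 C \<le> Max ?B" using fA C by (intro Max_ge) auto
    ultimately show "pos_chain_sum \<xi>1 C + \<epsilon> \<le> \<xi>1 None" using a2 x1N by simp
  qed
  show ?thesis using a1 a2 b by blast
qed

end
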